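(* Let $r \in \mathbb{Q}_{>0}$ be such that $S_r$ is atomic. Then $\rho(S_r) < \infty$ if and only if $\rho_k(S_r) < \infty$ for every $k \in \mathbb{N}$.
   Context: For $q \in \mathbb{Q}_{>0}$, $\mathsf{n}(q),\mathsf{d}(q)$ are the positive coprime integers with $q = \mathsf{n}(q)/\mathsf{d}(q)$. $S_r$ is the additive submonoid of $(\mathbb{Q}_{\ge 0},+)$ generated by $\{r^n : n \in \mathbb{N}_0\}$; it is atomic exactly when $r=1$ or $\mathsf{n}(r)>1$. $\mathsf{L}(x)$ denotes the set of lengths of factorizations of $x$ into atoms. The elasticity of $x \ne 0$ is $\rho(x) = \sup \mathsf{L}(x)/\inf \mathsf{L}(x)$, and $\rho(S_r) = \sup\{\rho(x) : x \ne 0\}$. For $k \in \mathbb{N}$, $\mathcal{U}_k(S_r)$ is the set of $\ell \in \mathbb{N}$ for which there exist atoms $a_1,\dots,a_k,b_1,\dots,b_\ell$ with $a_1+\dots+a_k = b_1 + \dots + b_\ell$, and $\rho_k(S_r) = \sup \mathcal{U}_k(S_r)$ is the $k$-th local elasticity. *)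

theory Defs
  imports Complex_Main "HOL-Library.Multiset" "HOL-Library.Extended_Real"
begin

definition Sr :: "rat \<Rightarrow> rat set" where
  "Sr r = {sum_mset m | m. set_mset m \<subseteq> range (\<lambda>n::nat. r ^ n)}"

definition atoms :: "rat \<Rightarrow> rat set" where
  "atoms r = {a \<in> Sr r. a \<noteq> 0 \<and>
     \<not> (\<exists>b c. b \<in> Sr r \<and> c \<in> Sr r \<and> b \<noteq> 0 \<and> c \<noteq> 0 \<and> a = b + c)}"

definition atomic :: "rat \<Rightarrow> bool" where
  "atomic r \<longleftrightarrow> (\<forall>x \<in> Sr r. x \<noteq> 0 \<longrightarrow>
      (\<exists>m. set_mset m \<subseteq> atoms r \<and> sum_mset m = x))"

definition Lset :: "rat \<Rightarrow> rat \<Rightarrow> nat set" where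
  "Lset r x = {size m | m. set_mset m \<subseteq> atoms r \<and> sum_mset m = x}"

definition elast :: "rat \<Rightarrow> rat \<Rightarrow> ereal" where
  "elast r x = Sup ((\<lambda>l. ereal (real l)) ` Lset r x) / ereal (real (Inf (Lset r x)))"

definition elasticity :: "rat \<Rightarrow> ereal" where
  "elasticity r = (SUP x \<in> Sr r - {0}. elast r x)"

definition Uk :: "rat \<Rightarrow> nat \<Rightarrow> nat set" where
  "Uk r k = {l. l \<ge> 1 \<and> (\<exists>A B. set_mset A \<subseteq> atoms r \<and> set_mset B \<subseteq> atoms r \<and>
       size A = k \<and> size B = l \<and> sum_mset A = sum_mset B)}"

definition local_elasticity :: "rat \<Rightarrow> nat \<Rightarrow> ereal" where
  "local_elasticity r k = Sup ((\<lambda>l. ereal (real l)) ` Uk r k)"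

end

theory Submission
  imports Defs
begin

lemma ex_J: "set_mset m \<subseteq> range f \<Longrightarrow> \<exists>J. m = image_mset f J"
proof (induction m)
  case empty then show ?case by auto
next
  case (add x m)
  then obtain J where "m = image_mset f J" by auto
  moreover from add.prems obtain j where "x = f j" by auto
  ultimately show ?case by (metis image_mset_add_mset)
qed

definition pw :: "rat \<Rightarrow> nat multiset \<Rightarrow> rat" where
  "pw r J = sum_mset (image_mset (\<lambda>j. r^j) J)"

lemma Sr_iff: "x \<in> Sr r \<longleftrightarrow> (\<exists>J. x = pw r J)"
proof
  assume "x \<in> Sr r"
  then obtain m where "set_mset m \<subseteq> range (\<lambda>n::nat. r ^ n)" "x = sum_mset m"
    unfolding Sr_def by auto
  then show "\<exists>J. x = pw r J" unfolding pw_def using ex_J by metis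
next
  assume "\<exists>J. x = pw r J"
  then obtain J where "x = pw r J" by auto
  then show "x \<in> Sr r" unfolding Sr_def pw_def
    by (intro CollectI exI[of _ "image_mset (\<lambda>j. r^j) J"]) auto
qed

lemma pw_add: "pw r (A + B) = pw r A + pw r B" by (simp add: pw_def)
lemma pw_single: "pw r {#j#} = r^j" by (simp add: pw_def)
lemma pw_add_mset: "pw r (add_mset j J) = r^j + pw r J" by (simp add: pw_def)
lemma pw_empty: "pw r {#} = 0" by (simp add: pw_def)
lemma pw_replicate: "pw r (replicate_mset k j) = of_nat k * r^j"
  by (induction k) (auto simp: pw_def algebra_simps)

lemma pw_nonneg: "r > 0 \<Longrightarrow> pw r J \<ge> 0"
  by (induction J) (auto simp: pw_empty pw_add_mset)

lemma pw_pos: assumes "r > 0" "J \<noteq> {#}" shows "pw r J > 0"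
proof -
  obtain j J' where "J = add_mset j J'" using assms(2) multi_nonempty_split by blast
  then show ?thesis using pw_nonneg[OF assms(1), of J'] assms(1) by (simp add: pw_add_mset add_pos_nonneg)
qed

lemma pow_in_Sr: "r^j \<in> Sr r" using Sr_iff pw_single by metis

lemma atoms_pow: assumes "r>0" "a \<in> atoms r" shows "\<exists>j. a = r^j"
proof -
  from assms have "a \<in> Sr r" "a \<noteq> 0" and na: "\<not> (\<exists>b c. b \<in> Sr r \<and> c \<in> Sr r \<and> b \<noteq> 0 \<and> c \<noteq> 0 \<and> a = b + c)"
    unfolding atoms_def by auto
  then obtain J where a: "a = pw r J" by (auto simp: Sr_iff)
  with \<open>a\<noteq>0\<close> have "J \<noteq> {#}" by (auto simp: pw_def)
  then obtain j J' where J: "J = add_mset j J'" by (metis multi_nonempty_split)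
  show ?thesis
  proof (cases "J' = {#}")
    case True thus ?thesis using a J by (auto simp: pw_def)
  next
    case False
    have "r^j \<in> Sr r" by (rule pow_in_Sr)
    moreover have "pw r J' \<in> Sr r" using Sr_iff by auto
    moreover have "r^j \<noteq> 0" using assms by simp
    moreover have "pw r J' \<noteq> 0" using pw_pos[OF assms(1) False] by simp
    moreover have "a = r^j + pw r J'" using a J pw_add_mset by simp
    ultimately show ?thesis using na by blast
  qed
qed

lemma atoms_pos: "r>0 \<Longrightarrow> a \<in> atoms r \<Longrightarrow> a > 0"
  using atoms_pow by fastforce

lemma pow_atom:
  assumes "r>0" and nosum: "\<And>J. pw r J = r^i \<Longrightarrow> size J \<ge> 2 \<Longrightarrow> False"
  shows "r^i \<in> atoms r"
proof -
  have "\<not> (\<exists>b c. b \<in> Sr r \<and> c \<in> Sr r \<and> b \<noteq> 0 \<and> c \<noteq> 0 \<and> r^i = b + c)"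
  proof
    assume "\<exists>b c. b \<in> Sr r \<and> c \<in> Sr r \<and> b \<noteq> 0 \<and> c \<noteq> 0 \<and> r^i = b + c"
    then obtain b c where bc: "b \<in> Sr r" "c \<in> Sr r" "b \<noteq> 0" "c \<noteq> 0" "r^i = b + c" by blast
    then obtain Jb Jc where b: "b = pw r Jb" and c: "c = pw r Jc" by (auto simp: Sr_iff)
    have "Jb \<noteq> {#}" "Jc \<noteq> {#}" using bc b c pw_empty by auto
    then have "size Jb \<ge> 1" "size Jc \<ge> 1" by (auto simp: Suc_le_eq nonempty_has_size)
    then have "size (Jb + Jc) \<ge> 2" by simp
    moreover have "pw r (Jb + Jc) = r^i" using bc b c pw_add by simp
    ultimately show False using nosum by blast
  qed
  then show ?thesis unfolding atoms_def using pow_in_Sr assms(1) by auto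
qed

lemma pw_mult:
  assumes "\<And>j. j \<in># J \<Longrightarrow> \<exists>z::int. r^j * D = of_int (c*z)"
  shows "\<exists>z::int. pw r J * D = of_int (c*z)"
  using assms
proof (induction J)
  case empty then show ?case by (auto simp: pw_empty intro: exI[of _ 0])
next
  case (add x J)
  then obtain z1 where z1: "pw r J * D = of_int (c*z1)" by auto
  from add.prems obtain z2 where z2: "r^x * D = of_int (c*z2)" by auto
  have "pw r (add_mset x J) * D = of_int (c*(z1+z2))"
    using z1 z2 by (simp add: pw_add_mset algebra_simps)
  then show ?case by blast
qed

lemma elem_less:
  assumes "r>0" "pw r J = r^i" "size J \<ge> 2" "j \<in># J"
  shows "r^j < r^i"
proof -
  obtain J' where J: "J = add_mset j J'" using assms(4) by (metis multi_member_split)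
  then have "J' \<noteq> {#}" using assms(3) by auto
  then have "pw r J' > 0" using pw_pos assms(1) by auto
  then show ?thesis using assms(2) J pw_add_mset by fastforce
qed

lemma coprime_dvd_one:
  fixes a b :: int
  assumes "coprime a b" "a dvd b ^ e" "a > 0"
  shows "a = 1"
proof -
  have "coprime a (b^e)" using assms(1) by simp
  then have "is_unit a" using assms(2) by (metis coprime_common_divisor dvd_refl)
  then show ?thesis using assms(3) by auto
qed

lemma nosum_gt1:
  assumes q: "quotient_of r = (n,d)" and r1: "r > 1" and d1: "d > 1"
    and s: "pw r J = r^i" and sz: "size J \<ge> 2"
  shows False
proof -
  have r: "r = of_int n / of_int d" using quotient_of_div[OF q] .
  have cop: "coprime n d" using quotient_of_coprime[OF q] .
  have dpos: "(of_int d::rat) > 0" using d1 by simp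
  have lt: "j < i" if "j \<in># J" for j
    using elem_less[OF _ s sz that] r1 power_less_imp_less_exp by fastforce
  have "J \<noteq> {#}" using sz by auto
  then obtain j0 where "j0 \<in># J" by blast
  with lt have i1: "i \<ge> 1" by fastforce
  have "\<exists>z::int. r^j * of_int d^(i-1) = of_int (1*z)" if "j \<in># J" for j
  proof -
    have ji: "j + (i-1-j) = i-1" using lt[OF that] by simp
    have "r^j * of_int d^(i-1) = r^j * of_int d^j * of_int d^(i-1-j)"
      by (metis ji power_add mult.assoc)
    also have "r^j * of_int d^j = of_int n ^ j" using dpos by (simp add: r power_divide)
    finally show ?thesis by (intro exI[of _ "n^j * d^(i-1-j)"]) simp
  qed
  then obtain z where z: "pw r J * of_int d^(i-1) = of_int (1*z)" using pw_mult by blast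
  have "pw r J * of_int d^(i-1) * of_int d = of_int n ^ i"
  proof -
    have "of_int d^(i-1) * of_int d = (of_int d ^ i :: rat)" using i1 power_minus_mult[of i "of_int d::rat"]
      by simp
    then show ?thesis using s dpos by (simp add: r power_divide mult.assoc)
  qed
  then have "of_int (z * d) = (of_int (n^i) :: rat)" using z by simp
  then have "z * d = n^i" by linarith
  then have "d dvd n^i" by (metis dvd_triv_right)
  then have "d = 1" using coprime_dvd_one[of d n i] cop d1 by (simp add: coprime_commute)
  then show False using d1 by simp
qed

lemma nosum_lt1:
  assumes q: "quotient_of r = (n,d)" and r0: "r > 0" and r1: "r < 1" and n1: "n > 1"
    and s: "pw r J = r^i" and sz: "size J \<ge> 2"
  shows False
proof -
  have r: "r = of_int n / of_int d" using quotient_of_div[OF q] .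
  have cop: "coprime n d" using quotient_of_coprime[OF q] .
  have dpos: "(of_int d::rat) > 0" using quotient_of_denom_pos[OF q] by simp
  have gt: "i < j" if "j \<in># J" for j
  proof (rule ccontr)
    assume "\<not> i < j"
    then have "r^i \<le> r^j" using r0 r1 by (simp add: power_decreasing)
    then show False using elem_less[OF r0 s sz that] by simp
  qed
  define Mx where "Mx = Max (set_mset J)"
  have jM: "j \<le> Mx" if "j \<in># J" for j unfolding Mx_def using that by simp
  have "J \<noteq> {#}" using sz by auto
  then obtain j0 where "j0 \<in># J" by blast
  with gt jM have iM: "i < Mx" by fastforce
  have "\<exists>z::int. r^j * of_int d^Mx = of_int (n^(i+1)*z)" if "j \<in># J" for j
  proof -
    have ji: "j + (Mx-j) = Mx" using jM[OF that] by simp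
    have nj: "n^j = n^(i+1) * n^(j-(i+1))" using gt[OF that]
      by (metis le_add_diff_inverse Suc_leI Suc_eq_plus1 power_add)
    have "r^j * of_int d^Mx = r^j * of_int d^j * of_int d^(Mx-j)"
      by (metis ji power_add mult.assoc)
    also have "r^j * of_int d^j = of_int n ^ j" using dpos by (simp add: r power_divide)
    also have "(of_int n ^ j ::rat) = of_int (n^(i+1)) * of_int (n^(j-(i+1)))"
      by (simp only: of_int_power[symmetric] of_int_mult[symmetric] nj)
    finally show ?thesis by (intro exI[of _ "n^(j-(i+1)) * d^(Mx-j)"]) (simp add: mult.assoc)
  qed
  then obtain z where z: "pw r J * of_int d^Mx = of_int (n^(i+1)*z)" using pw_mult by blast
  have "pw r J * of_int d^Mx = of_int n ^ i * of_int d^(Mx-i)"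
  proof -
    have "of_int d^Mx = (of_int d ^ i * of_int d ^ (Mx - i) :: rat)" using iM
      by (metis le_add_diff_inverse less_imp_le power_add)
    then show ?thesis using s dpos by (simp add: r power_divide)
  qed
  then have "of_int (n^(i+1)*z) = (of_int (n^i * d^(Mx-i)) :: rat)" using z by simp
  then have "n^(i+1)*z = n^i * d^(Mx-i)" by linarith
  then have "n^i * (n*z) = n^i * d^(Mx-i)" by (simp add: algebra_simps)
  then have "n*z = d^(Mx-i)" using n1 by simp
  then have "n dvd d^(Mx-i)" by (metis dvd_triv_left)
  then have "n = 1" using coprime_dvd_one[of n d] cop n1 by simp
  then show False using n1 by simp
qed


lemma pw_nat: "r = of_nat p \<Longrightarrow> pw r J = of_nat (sum_mset (image_mset (\<lambda>j. p^j) J))"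
  by (induction J) (auto simp: pw_empty pw_add_mset)

lemma sum_ones: "set_mset A \<subseteq> {1} \<Longrightarrow> sum_mset A = (of_nat (size A)::rat)"
  by (induction A) auto

lemma SrA: assumes "r = of_nat p"
  shows "x \<in> Sr r \<longleftrightarrow> (\<exists>q. x = of_nat q)"
proof
  assume "x \<in> Sr r"
  then obtain J where "x = pw r J" by (auto simp: Sr_iff)
  then show "\<exists>q. x = of_nat q" using pw_nat[OF assms] by blast
next
  assume "\<exists>q. x = of_nat q"
  then obtain q where "x = of_nat q" by auto
  then have "x = pw r (replicate_mset q 0)" by (simp add: pw_replicate)
  then show "x \<in> Sr r" by (auto simp: Sr_iff)
qed

lemma atomsA: assumes "r = of_nat p" shows "atoms r = {1}"
proof
  show "atoms r \<subseteq> {1}"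
  proof
    fix a assume a: "a \<in> atoms r"
    then have "a \<in> Sr r" "a \<noteq> 0" and na: "\<not> (\<exists>b c. b \<in> Sr r \<and> c \<in> Sr r \<and> b \<noteq> 0 \<and> c \<noteq> 0 \<and> a = b + c)"
      unfolding atoms_def by auto
    then obtain q where q: "a = of_nat q" using SrA[OF assms] by auto
    with \<open>a \<noteq> 0\<close> have "q \<ge> 1" by simp
    show "a \<in> {1}"
    proof (cases "q = 1")
      case True then show ?thesis using q by simp
    next
      case False
      then have "a = 1 + of_nat (q-1)" "(of_nat (q-1)::rat) \<noteq> 0" using q \<open>q\<ge>1\<close> by (auto simp: of_nat_diff)
      moreover have "(1::rat) \<in> Sr r" unfolding SrA[OF assms] by (rule exI[of _ 1]) simp
      moreover have "(of_nat (q-1)::rat) \<in> Sr r" using SrA[OF assms] by blast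
      moreover have "(1::rat) \<noteq> 0" by simp
      ultimately have False using na by blast
      then show ?thesis ..
    qed
  qed
next
  have "(1::rat) \<in> Sr r" unfolding SrA[OF assms] by (rule exI[of _ 1]) simp
  moreover have "\<not> (\<exists>b c. b \<in> Sr r \<and> c \<in> Sr r \<and> b \<noteq> 0 \<and> c \<noteq> 0 \<and> (1::rat) = b + c)"
  proof
    assume "\<exists>b c. b \<in> Sr r \<and> c \<in> Sr r \<and> b \<noteq> 0 \<and> c \<noteq> 0 \<and> (1::rat) = b + c"
    then obtain b c where bc: "b \<in> Sr r" "c \<in> Sr r" "b \<noteq> 0" "c \<noteq> 0" "(1::rat) = b + c" by blast
    obtain q1 where q1: "b = of_nat q1" using bc(1) SrA[OF assms] by blast
    obtain q2 where q2: "c = of_nat q2" using bc(2) SrA[OF assms] by blast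
    have "q1 \<noteq> 0" "q2 \<noteq> 0" "(1::rat) = of_nat q1 + of_nat q2" using bc q1 q2 by auto
    then have "1 = q1 + q2" by (metis of_nat_1 of_nat_add of_nat_eq_iff)
    then show False using \<open>q1 \<noteq> 0\<close> \<open>q2 \<noteq> 0\<close> by simp
  qed
  moreover have "(1::rat) \<noteq> 0" by simp
  ultimately have "(1::rat) \<in> atoms r" unfolding atoms_def mem_Collect_eq by blast
  then show "{1} \<subseteq> atoms r" by simp
qed

lemma caseA:
  assumes "r = of_nat p"
  shows "elasticity r < \<infinity>" "local_elasticity r k < \<infinity>"
proof -
  have at: "atoms r = {1}" by (rule atomsA[OF assms])
  have "elast r x \<le> 1" if "x \<in> Sr r - {0}" for x
  proof -
    have "x \<in> Sr r" using that by simp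
    then obtain q where q: "x = of_nat q" using SrA[OF assms] by blast
    with that have q1: "q \<ge> 1" by simp
    have LQ: "Lset r x = {q}"
    proof
      show "Lset r x \<subseteq> {q}"
      proof
        fix l assume "l \<in> Lset r x"
        then obtain m :: "rat multiset" where m: "set_mset m \<subseteq> {1}" "sum_mset m = x" "l = size m"
          unfolding Lset_def at by auto
        then have "(of_nat l::rat) = of_nat q" using sum_ones[OF m(1)] q by simp
        then show "l \<in> {q}" by simp
      qed
      have "set_mset (replicate_mset q (1::rat)) \<subseteq> atoms r" using at by simp
      moreover have "sum_mset (replicate_mset q (1::rat)) = x" using q by simp
      moreover have "size (replicate_mset q (1::rat)) = q" by simp
      ultimately have "q \<in> Lset r x" unfolding Lset_def mem_Collect_eq
        by (auto intro!: exI[of _ "replicate_mset q (1::rat)"])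
      then show "{q} \<subseteq> Lset r x" by simp
    qed
    have e1: "elast r x = Sup ((\<lambda>l. ereal (real l)) ` {q}) / ereal (real (Inf {q}))"
      unfolding elast_def LQ by (rule refl)
    have e2: "Sup ((\<lambda>l. ereal (real l)) ` {q}) = ereal (real q)" by simp
    have e3: "Inf {q} = q" by simp
    have e4: "ereal (real q) / ereal (real q) = 1" using q1 by (simp add: divide_ereal_def)
    show ?thesis by (simp only: e1 e2 e3 e4 order_refl)
  qed
  then have "elasticity r \<le> 1" unfolding elasticity_def by (rule SUP_least)
  moreover have "(1::ereal) < \<infinity>" by simp
  ultimately show "elasticity r < \<infinity>" by (rule order.strict_trans1)
  have "Uk r k \<subseteq> {k}"
  proof
    fix l assume "l \<in> Uk r k"
    then obtain A B :: "rat multiset" where AB: "set_mset A \<subseteq> {1}" "set_mset B \<subseteq> {1}" "size A = k" "size B = l" "sum_mset A = sum_mset B"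
      unfolding Uk_def at by auto
    then have "(of_nat k::rat) = of_nat l" using sum_ones[OF AB(1)] sum_ones[OF AB(2)] by simp
    then show "l \<in> {k}" by simp
  qed
  then have "local_elasticity r k \<le> ereal (real k)" unfolding local_elasticity_def
    by (intro Sup_least) auto
  moreover have "ereal (real k) < \<infinity>" by simp
  ultimately show "local_elasticity r k < \<infinity>" by (rule order.strict_trans1)
qed


lemma n1_impossible:
  assumes q: "quotient_of r = (1,d)" and d1: "d > 1" and at: "atomic r"
  shows False
proof -
  have r: "r = 1 / of_int d" using quotient_of_div[OF q] by simp
  have r0: "r > 0" using r d1 by simp
  have rd: "of_int d * r = 1" using r d1 by simp
  have "atoms r = {}"
  proof (rule ccontr)
    assume "atoms r \<noteq> {}"
    then obtain a where a: "a \<in> atoms r" by blast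
    then obtain j where aj: "a = r^j" using atoms_pow[OF r0] by blast
    from a have na: "\<not> (\<exists>b c. b \<in> Sr r \<and> c \<in> Sr r \<and> b \<noteq> 0 \<and> c \<noteq> 0 \<and> a = b + c)"
      unfolding atoms_def by auto
    define e where "e = nat d - 1"
    have e1: "e \<ge> 1" using d1 unfolding e_def by simp
    have "of_int d = (1 + of_nat e :: rat)" using d1 unfolding e_def by (simp add: of_nat_diff)
    then have "a = r^(Suc j) + of_nat e * r^(Suc j)" using rd aj
      by (metis mult.assoc mult.commute mult_1 power_Suc distrib_right)
    moreover have "r^(Suc j) \<in> Sr r" by (rule pow_in_Sr)
    moreover have "of_nat e * r^(Suc j) \<in> Sr r" using pw_replicate Sr_iff by metis
    moreover have "r^(Suc j) \<noteq> 0" "of_nat e * r^(Suc j) \<noteq> 0" using r0 e1 by auto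
    ultimately show False using na by blast
  qed
  moreover have "(1::rat) \<in> Sr r" using pow_in_Sr[of r 0] by simp
  ultimately obtain m where "set_mset m \<subseteq> {}" "sum_mset m = (1::rat)"
    using at unfolding atomic_def by fastforce
  then show False by simp
qed

fun blk :: "nat \<Rightarrow> nat \<Rightarrow> nat multiset" where
  "blk c 0 = {#}"
| "blk c (Suc M) = blk c M + replicate_mset c (Suc M)"

lemma size_blk: "size (blk c M) = c * M"
  by (induction M) auto

lemma B1_id:
  assumes rd: "of_nat dd * r = of_nat nn" and "dd \<le> nn"
  shows "of_nat nn + pw r (blk (nn-dd) M) = of_nat dd * r^(Suc M)"
proof (induction M)
  case 0 then show ?case using rd by (simp add: pw_empty)
next
  case (Suc M)
  have "of_nat nn + pw r (blk (nn-dd) (Suc M)) = of_nat dd * r^(Suc M) + of_nat (nn-dd) * r^(Suc M)"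
    using Suc by (simp add: pw_add pw_replicate)
  also have "\<dots> = of_nat nn * r^(Suc M)" using assms(2) by (simp add: of_nat_diff algebra_simps)
  also have "\<dots> = of_nat dd * r^(Suc (Suc M))" using rd by (simp add: algebra_simps)
  finally show ?case .
qed

lemma B2_id:
  assumes rd: "of_nat dd * r = of_nat nn" and "nn \<le> dd"
  shows "pw r (blk (dd-nn) M) + of_nat dd * r^(Suc M) = of_nat nn"
proof (induction M)
  case 0 then show ?case using rd by (simp add: pw_empty)
next
  case (Suc M)
  have "pw r (blk (dd-nn) (Suc M)) + of_nat dd * r^(Suc (Suc M))
      = pw r (blk (dd-nn) M) + (of_nat (dd-nn) * r^(Suc M) + of_nat dd * r * r^(Suc M))"
    by (simp add: pw_add pw_replicate algebra_simps)
  also have "of_nat (dd-nn) * r^(Suc M) + of_nat dd * r * r^(Suc M) = of_nat dd * r^(Suc M)"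
    using assms by (simp add: of_nat_diff algebra_simps)
  finally show ?case using Suc by simp
qed

lemma inf_from_all:
  assumes "\<And>M::nat. ereal (real M) \<le> y" shows "y = \<infinity>"
proof (cases y)
  case (real t)
  have "ereal (real (nat \<lceil>t\<rceil> + 1)) \<le> y" by (rule assms)
  then have "real (nat \<lceil>t\<rceil> + 1) \<le> t" using real by simp
  moreover have "t < real (nat \<lceil>t\<rceil> + 1)" by linarith
  ultimately show ?thesis by simp
next
  case MInf
  then show ?thesis using assms[of 0] by simp
qed simp

lemma infinite_case:
  assumes r0: "r > 0" and k1: "k \<ge> 1" and allat: "\<And>j. r^j \<in> atoms r"
    and fam: "\<And>M. \<exists>JA JB. size JA = k \<and> size JB \<ge> M \<and> pw r JA = pw r JB"
  shows "elasticity r = \<infinity>" "local_elasticity r k = \<infinity>"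
proof -
  have conv: "set_mset (image_mset (\<lambda>j. r^j) J) \<subseteq> atoms r" for J using allat by auto
  have sizeconv: "size (image_mset (\<lambda>j. r^j) J) = size J" for J by simp
  have sumconv: "sum_mset (image_mset (\<lambda>j. r^j) J) = pw r J" for J by (simp add: pw_def)
  show "local_elasticity r k = \<infinity>"
  proof (rule inf_from_all)
    fix M :: nat
    obtain JA JB where J: "size JA = k" "size JB \<ge> M + 1" "pw r JA = pw r JB" using fam by blast
    have "size JB \<in> Uk r k" unfolding Uk_def mem_Collect_eq
      using J conv sizeconv sumconv
      by (intro conjI exI[of _ "image_mset (\<lambda>j. r^j) JA"] exI[of _ "image_mset (\<lambda>j. r^j) JB"]) auto
    then have "ereal (real (size JB)) \<le> local_elasticity r k" unfolding local_elasticity_def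
      by (intro Sup_upper) auto
    moreover have "ereal (real M) \<le> ereal (real (size JB))" using J by simp
    ultimately show "ereal (real M) \<le> local_elasticity r k" by (rule order.trans[rotated])
  qed
  show "elasticity r = \<infinity>"
  proof (rule inf_from_all)
    fix M :: nat
    obtain JA JB where J: "size JA = k" "size JB \<ge> M * k" "pw r JA = pw r JB" using fam by blast
    define x where "x = pw r JA"
    have JA0: "JA \<noteq> {#}" using J k1 by auto
    have x0: "x > 0" unfolding x_def using pw_pos[OF r0 JA0] .
    have xS: "x \<in> Sr r - {0}" using x0 unfolding x_def by (auto simp: Sr_iff)
    define L where "L = Lset r x"
    have kL: "k \<in> L" unfolding L_def Lset_def mem_Collect_eq x_def
      using J conv sizeconv sumconv
      by (intro exI[of _ "image_mset (\<lambda>j. r^j) JA"]) auto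
    have bL: "size JB \<in> L" unfolding L_def Lset_def mem_Collect_eq x_def
      using J conv sizeconv sumconv
      by (intro exI[of _ "image_mset (\<lambda>j. r^j) JB"]) auto
    define i where "i = Inf L"
    have iL: "i \<in> L" unfolding i_def using kL Inf_nat_def1[of L] by blast
    have ik: "i \<le> k" unfolding i_def Inf_nat_def using kL by (rule Least_le)
    have i1: "i \<ge> 1"
    proof -
      obtain m where m: "i = size m" "sum_mset m = x" using iL unfolding L_def Lset_def by auto
      then have "m \<noteq> {#}" using x0 by auto
      then show ?thesis using m by (simp add: Suc_le_eq nonempty_has_size)
    qed
    have sup: "ereal (real (size JB)) \<le> Sup ((\<lambda>l. ereal (real l)) ` L)"
      using bL by (intro Sup_upper) auto
    have "elast r x = Sup ((\<lambda>l. ereal (real l)) ` L) / ereal (real i)"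
      unfolding elast_def L_def i_def by (rule refl)
    also have "\<dots> \<ge> ereal (real (size JB)) / ereal (real i)"
      using sup i1 by (intro ereal_divide_right_mono) auto
    finally have e1: "ereal (real (size JB)) / ereal (real i) \<le> elast r x" .
    have "ereal (real (size JB)) / ereal (real i) = ereal (real (size JB) / real i)"
      using i1 by (simp add: divide_ereal_def divide_inverse)
    moreover have "real M \<le> real (size JB) / real i"
    proof -
      have "real M * real i \<le> real M * real k" using ik by (simp add: mult_left_mono)
      also have "\<dots> \<le> real (size JB)" using J(2) by (metis of_nat_le_iff of_nat_mult)
      finally show ?thesis using i1 by (simp add: pos_le_divide_eq)
    qed
    ultimately have "ereal (real M) \<le> elast r x" using e1 by (metis ereal_less_eq(3) order.trans)
    also have "elast r x \<le> elasticity r" unfolding elasticity_def using xS by (rule SUP_upper)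
    finally show "ereal (real M) \<le> elasticity r" .
  qed
qed


theorem corollary4p10:
  fixes r :: rat
  assumes "r > 0" and "atomic r"
  shows "elasticity r < \<infinity> \<longleftrightarrow> (\<forall>k::nat. k \<ge> 1 \<longrightarrow> local_elasticity r k < \<infinity>)"
proof -
  obtain n d where q: "quotient_of r = (n,d)" by (cases "quotient_of r") auto
  have rq: "r = of_int n / of_int d" using quotient_of_div[OF q] .
  have d0: "d > 0" using quotient_of_denom_pos[OF q] .
  have n0: "n > 0" using assms(1) d0 rq by (simp add: zero_less_divide_iff)
  show ?thesis
  proof (cases "d = 1")
    case True
    then have "r = of_nat (nat n)" using rq n0 by simp
    then show ?thesis using caseA by blast
  next
    case False
    then have d1: "d > 1" using d0 by simp
    define nn where "nn = nat n"
    define dd where "dd = nat d"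
    have rd: "of_nat dd * r = of_nat nn" unfolding nn_def dd_def using rq n0 d0 by simp
    have dd0: "dd > 0" unfolding dd_def using d0 by simp
    have r_ne1: "r \<noteq> 1"
    proof
      assume "r = 1"
      then have "quotient_of r = (1,1)" by simp
      then show False using q False by simp
    qed
    have "\<exists>k\<ge>1. elasticity r = \<infinity> \<and> local_elasticity r k = \<infinity>"
    proof (cases "r > 1")
      case True
      have allat: "r^j \<in> atoms r" for j
        using pow_atom[OF assms(1)] nosum_gt1[OF q True d1] by blast
      have "of_nat dd < (of_nat nn :: rat)" using rd True dd0
        by (metis mult.commute mult_less_cancel_left_pos mult_1_right of_nat_0_less_iff)
      then have ndd: "dd < nn" by simp
      have fam: "\<exists>JA JB. size JA = dd \<and> size JB \<ge> M \<and> pw r JA = pw r JB" for M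
      proof (intro exI conjI)
        show "size (replicate_mset dd (Suc M)) = dd" by simp
        have "1 * M \<le> (nn-dd) * M" using ndd by (intro mult_le_mono1) simp
        then show "M \<le> size (replicate_mset nn 0 + blk (nn-dd) M)"
          unfolding size_union size_replicate_mset size_blk by linarith
        show "pw r (replicate_mset dd (Suc M)) = pw r (replicate_mset nn 0 + blk (nn-dd) M)"
          using B1_id[OF rd, of M] ndd by (simp add: pw_add pw_replicate)
      qed
      have "dd \<ge> 1" using dd0 by simp
      then show ?thesis using infinite_case[OF assms(1) _ allat fam] by blast
    next
      case False
      then have r1: "r < 1" using r_ne1 by simp
      have n1: "n > 1"
      proof (rule ccontr)
        assume "\<not> n > 1"
        then have "n = 1" using n0 by simp
        then show False using n1_impossible[OF _ d1 assms(2)] q by simp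
      qed
      have allat: "r^j \<in> atoms r" for j
        using pow_atom[OF assms(1)] nosum_lt1[OF q assms(1) r1 n1] by blast
      have "of_nat nn < (of_nat dd :: rat)" using rd r1 dd0
        by (metis mult.commute mult_less_cancel_left_pos mult_1_right of_nat_0_less_iff)
      then have ndd: "nn < dd" by simp
      have fam: "\<exists>JA JB. size JA = nn \<and> size JB \<ge> M \<and> pw r JA = pw r JB" for M
      proof (intro exI conjI)
        show "size (replicate_mset nn 0) = nn" by simp
        have "1 * M \<le> (dd-nn) * M" using ndd by (intro mult_le_mono1) simp
        then show "M \<le> size (blk (dd-nn) M + replicate_mset dd (Suc M))"
          unfolding size_union size_replicate_mset size_blk by linarith
        show "pw r (replicate_mset nn 0) = pw r (blk (dd-nn) M + replicate_mset dd (Suc M))"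
          using B2_id[OF rd, of M] ndd by (simp add: pw_add pw_replicate)
      qed
      have "nn \<ge> 1" unfolding nn_def using n1 by simp
      then show ?thesis using infinite_case[OF assms(1) _ allat fam] by blast
    qed
    then show ?thesis by auto
  qed
qed

end
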